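(* Let $(H,h)$ be an equivariant pair. Suppose $\{(H_n,h_n)\}$ is a sequence derived from $(H,h)$, and there are three distinct points $a,b,c \in S$ such that the sequences $\{h_n(a)\}$, $\{h_n(b)\}$, $\{h_n(c)\}$ converge to three distinct points of $S$. Then $\{(H_n,h_n)\}$ is tame, i.e. for every $p\in\mathbb{H}^3$ the sequence $\{H_n(p)\}$ is bounded in $\mathbb{H}^3$.
   Context: $\mathbb{H}^3$ is the upper half space model $\mathbb{C}\times(0,\infty)$ of hyperbolic $3$-space, with ideal boundary the Riemann sphere $S=\mathbb{C}\cup\{\infty\}$; $\mathcal{I}$ is the isometry group of $\mathbb{H}^3$, and each element of $\mathcal{I}$ extends to a conformal transformation of $S$ (every conformal transformation of $S$ arises this way), so $\mathcal{I}$ acts on $\mathbb{H}^3\cup S$. A nice lattice is a subgroup $\Gamma\subset\mathcal{I}$ acting freely, properly discontinuously and cocompactly on $\mathbb{H}^3$. A map $H:\mathbb{H}^3\to\mathbb{H}^3$ is $K$-bi-Lipschitz if it is a bijection with $K^{-1}d(x,y)\le d(H(x),H(y))\le Kd(x,y)$. An equivariant pair $(H,h)$ consists of a bi-Lipschitz map $H:\mathbb{H}^3\to\mathbb{H}^3$ and a homeomorphism $h:S\to S$ such that $H\cup h$ is continuous on $\mathbb{H}^3\cup S$ (i.e. $h$ is the continuous extension of $H$), together with nice lattices $\Gamma_1,\Gamma_2$ such that $H\Gamma_1H^{-1}=\Gamma_2$ and $h\Gamma_1h^{-1}=\Gamma_2$. A sequence $\{(H_n,h_n)\}$ is derived from $(H,h)$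 if for each $n$ there are $f_n,g_n\in\mathcal{I}$ with $H_n=f_nHg_n$ and $h_n=f_nhg_n$. *)

theory Defs
  imports "HOL-Analysis.Analysis"
begin

text \<open>Upper half-space model: points (z,t) with z complex, t > 0.\<close>
type_synonym pt = "complex \<times> real"

definition H3 :: "pt set" where
  "H3 = {p. snd p > 0}"

definition hdist :: "pt \<Rightarrow> pt \<Rightarrow> real" where
  "hdist p q = arcosh (1 + ((cmod (fst p - fst q))\<^sup>2 + (snd p - snd q)\<^sup>2)
                          / (2 * snd p * snd q))"

text \<open>Riemann sphere S = C \<union> {\<infinity>}: None is \<infinity>.\<close>
type_synonym sphere = "complex option"

text \<open>Cayley embedding of the closed upper half-space (with \<infinity>) onto the closed
  unit ball of R^3 = C \<times> R; it defines the topology of H^3 \<union> S.\<close>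
definition cayley :: "pt \<Rightarrow> pt" where
  "cayley p = (let N = (cmod (fst p))\<^sup>2 + (snd p + 1)\<^sup>2
               in (2 * fst p / complex_of_real N, 2 * (snd p + 1) / N - 1))"

definition emb_S :: "sphere \<Rightarrow> pt" where
  "emb_S \<xi> = (case \<xi> of None \<Rightarrow> (0, -1) | Some z \<Rightarrow> cayley (z, 0))"

type_synonym clpt = "pt + sphere"

definition cl_emb :: "clpt \<Rightarrow> pt" where
  "cl_emb x = (case x of Inl p \<Rightarrow> cayley p | Inr \<xi> \<Rightarrow> emb_S \<xi>)"

definition cl_space :: "clpt set" where
  "cl_space = Inl ` H3 \<union> range Inr"

definition cl_top :: "clpt topology" where
  "cl_top = pullback_topology cl_space cl_emb euclidean"

definition pair_map :: "(pt \<Rightarrow> pt) \<Rightarrow> (sphere \<Rightarrow> sphere) \<Rightarrow> clpt \<Rightarrow> clpt" where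
  "pair_map H h x = (case x of Inl p \<Rightarrow> Inl (H p) | Inr \<xi> \<Rightarrow> Inr (h \<xi>))"

definition S_conv :: "(nat \<Rightarrow> sphere) \<Rightarrow> sphere \<Rightarrow> bool" where
  "S_conv xs \<xi> \<longleftrightarrow> ((\<lambda>n. emb_S (xs n)) \<longlonglongrightarrow> emb_S \<xi>)"

text \<open>The isometry group \<I>: an isometry G of H^3 (normalized to be the identity
  off H^3) together with its extension g to S, G \<union> g continuous on H^3 \<union> S.\<close>
definition Isom :: "((pt \<Rightarrow> pt) \<times> (sphere \<Rightarrow> sphere)) set" where
  "Isom = {(G, g). bij_betw G H3 H3 \<and> (\<forall>x. x \<notin> H3 \<longrightarrow> G x = x)
              \<and> (\<forall>p\<in>H3. \<forall>q\<in>H3. hdist (G p) (G q) = hdist p q)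
              \<and> bij g \<and> continuous_map cl_top cl_top (pair_map G g)}"

definition bi_lipschitz :: "real \<Rightarrow> (pt \<Rightarrow> pt) \<Rightarrow> bool" where
  "bi_lipschitz K H \<longleftrightarrow> K > 0 \<and> bij_betw H H3 H3 \<and>
     (\<forall>x\<in>H3. \<forall>y\<in>H3. hdist x y / K \<le> hdist (H x) (H y) \<and> hdist (H x) (H y) \<le> K * hdist x y)"

definition nice_lattice :: "((pt \<Rightarrow> pt) \<times> (sphere \<Rightarrow> sphere)) set \<Rightarrow> bool" where
  "nice_lattice \<Gamma> \<longleftrightarrow>
     \<Gamma> \<subseteq> Isom \<and> (id, id) \<in> \<Gamma>
     \<and> (\<forall>(G1, g1)\<in>\<Gamma>. \<forall>(G2, g2)\<in>\<Gamma>. (G1 \<circ> G2, g1 \<circ> g2) \<in> \<Gamma>)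
     \<and> (\<forall>(G, g)\<in>\<Gamma>. (inv G, inv g) \<in> \<Gamma>)
     \<comment> \<open>free action\<close>
     \<and> (\<forall>(G, g)\<in>\<Gamma>. (\<exists>p\<in>H3. G p = p) \<longrightarrow> (G, g) = (id, id))
     \<comment> \<open>properly discontinuous\<close>
     \<and> (\<forall>K. K \<subseteq> H3 \<and> compact K \<longrightarrow> finite {\<gamma>\<in>\<Gamma>. fst \<gamma> ` K \<inter> K \<noteq> {}})
     \<comment> \<open>cocompact\<close>
     \<and> (\<exists>K. K \<subseteq> H3 \<and> compact K \<and> (\<Union>\<gamma>\<in>\<Gamma>. fst \<gamma> ` K) = H3)"

definition equivariant_pair :: "(pt \<Rightarrow> pt) \<Rightarrow> (sphere \<Rightarrow> sphere) \<Rightarrow> bool" where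
  "equivariant_pair H h \<longleftrightarrow>
     (\<exists>K. bi_lipschitz K H) \<and> bij h \<and>
     continuous_map cl_top cl_top (pair_map H h) \<and>
     (\<exists>\<Gamma>1 \<Gamma>2. nice_lattice \<Gamma>1 \<and> nice_lattice \<Gamma>2 \<and>
        (\<lambda>G. \<lambda>p. if p \<in> H3 then H (G (inv_into H3 H p)) else p) ` (fst ` \<Gamma>1) = fst ` \<Gamma>2 \<and>
        (\<lambda>g. h \<circ> g \<circ> inv h) ` (snd ` \<Gamma>1) = snd ` \<Gamma>2)"

definition derived :: "(nat \<Rightarrow> pt \<Rightarrow> pt) \<Rightarrow> (nat \<Rightarrow> sphere \<Rightarrow> sphere)
                        \<Rightarrow> (pt \<Rightarrow> pt) \<Rightarrow> (sphere \<Rightarrow> sphere) \<Rightarrow> bool" where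
  "derived Hs hs H h \<longleftrightarrow> (\<forall>n. \<exists>f\<in>Isom. \<exists>g\<in>Isom.
      (\<forall>p\<in>H3. Hs n p = fst f (H (fst g p))) \<and> hs n = snd f \<circ> h \<circ> snd g)"

definition tame :: "(nat \<Rightarrow> pt \<Rightarrow> pt) \<Rightarrow> bool" where
  "tame Hs \<longleftrightarrow> (\<forall>p\<in>H3. \<exists>R. \<forall>n. Hs n p \<in> H3 \<and> hdist (Hs n p) p \<le> R)"

end

theory Submission
  imports Defs
begin

definition rho :: "pt \<Rightarrow> real" where "rho P = 1 - (norm P)^2"
definition Phi :: "pt \<Rightarrow> pt \<Rightarrow> pt \<Rightarrow> real" where
  "Phi X Y P = (norm (P - X))^2 * (norm (P - Y))^2 / ((rho P)^2 * (norm (X - Y))^2)"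
definition Dq :: "pt \<Rightarrow> pt \<Rightarrow> real" where
  "Dq P Q = (norm (P - Q))^2 / (rho P * rho Q)"
definition iota :: "pt \<Rightarrow> pt" where "iota x = (2 / (norm x)^2) *\<^sub>R x"
abbreviation e0 :: pt where "e0 \<equiv> (0, 1)"

lemma normsq_pt: "(norm (p::pt))^2 = (cmod (fst p))^2 + (snd p)^2"
  by (cases p) (simp add: norm_Pair)

lemma cayley_iota: "cayley p = iota (p + e0) - e0"
proof (cases p)
  case (Pair z t)
  have N: "(norm (p + e0))^2 = (cmod z)^2 + (t+1)^2" using Pair by (simp add: normsq_pt)
  show ?thesis unfolding cayley_def iota_def Let_def using Pair N
    by (simp add: scaleR_conv_of_real field_simps)
qed

lemma norm_iota_diff:
  assumes "x \<noteq> 0" "y \<noteq> 0"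
  shows "(norm (iota x - iota y))^2 = 4 * (norm (x - y))^2 / ((norm x)^2 * (norm y)^2)"
proof -
  have nx: "(norm x)^2 \<noteq> 0" "(norm y)^2 \<noteq> 0" using assms by auto
  show ?thesis
    unfolding iota_def power2_norm_eq_inner
    using nx unfolding power2_norm_eq_inner
    by (simp add: inner_diff_left inner_diff_right inner_commute field_simps power2_eq_square)
qed

lemma snd_pos_ne: "snd p \<ge> 0 \<Longrightarrow> p + e0 \<noteq> 0"
  by (cases p) (auto simp: zero_prod_def)

lemma normsq_pe_pos: "snd p \<ge> 0 \<Longrightarrow> (norm (p + e0))^2 > 0"
  using snd_pos_ne by auto

lemma rho_cayley:
  assumes "snd p \<ge> 0"
  shows "rho (cayley p) = 4 * snd p / (norm (p + e0))^2"
proof -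
  define x where "x = p + e0"
  have x0: "(norm x)^2 > 0" using normsq_pe_pos[OF assms] x_def by simp
  have ie: "inner x e0 = snd p + 1" unfolding x_def by (cases p) simp
  have "rho (cayley p) = 1 - inner (iota x - e0) (iota x - e0)"
    unfolding rho_def cayley_iota x_def power2_norm_eq_inner ..
  also have "\<dots> = 1 - (4 / (norm x)^2 - 4 * (snd p + 1) / (norm x)^2 + 1)"
  proof -
    define s where "s = 2 / (norm x)^2"
    have xx: "inner x x = (norm x)^2" by (simp add: power2_norm_eq_inner)
    have "inner (iota x - e0) (iota x - e0) = s * s * (x \<bullet> x) - 2 * s * (x \<bullet> e0) + 1"
      unfolding iota_def s_def[symmetric]
      by (simp add: inner_diff_left inner_diff_right inner_commute algebra_simps)
    also have "\<dots> = 4 / (norm x)^2 - 4 * (snd p + 1) / (norm x)^2 + 1"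
      unfolding xx ie s_def using x0 by (simp add: field_simps power2_eq_square)
    finally show ?thesis by simp
  qed
  also have "\<dots> = 4 * snd p / (norm x)^2" using x0 by (simp add: field_simps)
  finally show ?thesis unfolding x_def .
qed


lemma Dq_cayley:
  assumes "snd p > 0" "snd q > 0"
  shows "Dq (cayley p) (cayley q) = (norm (p - q))^2 / (4 * snd p * snd q)"
proof -
  define x where "x = p + e0"
  define y where "y = q + e0"
  have x0: "(norm x)^2 > 0" "(norm y)^2 > 0" using normsq_pe_pos assms x_def y_def by auto
  have xy: "x - y = p - q" unfolding x_def y_def by simp
  have "norm (cayley p - cayley q) = norm (iota x - iota y)" unfolding cayley_iota x_def y_def by simp
  hence nc: "(norm (cayley p - cayley q))^2 = 4 * (norm (p - q))^2 / ((norm x)^2 * (norm y)^2)"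
    using norm_iota_diff[of x y] x0 xy by auto
  have rp: "rho (cayley p) = 4 * snd p / (norm x)^2" and rq: "rho (cayley q) = 4 * snd q / (norm y)^2"
    using rho_cayley assms x_def y_def by auto
  show ?thesis unfolding Dq_def nc rp rq using x0 assms by (simp add: field_simps)
qed

lemma hdist_cayley:
  assumes "p \<in> H3" "q \<in> H3"
  shows "hdist p q = arcosh (1 + 2 * Dq (cayley p) (cayley q))"
proof -
  have "snd p > 0" "snd q > 0" using assms by (auto simp: H3_def)
  moreover have "(norm (p - q))^2 = (cmod (fst p - fst q))^2 + (snd p - snd q)^2"
    by (simp add: normsq_pt)
  ultimately show ?thesis unfolding hdist_def Dq_cayley[OF \<open>snd p > 0\<close> \<open>snd q > 0\<close>]
    by (intro arg_cong[of _ _ arcosh]) (simp add: field_simps)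
qed

lemma rho_cayley_pos: "p \<in> H3 \<Longrightarrow> rho (cayley p) > 0"
  using rho_cayley[of p] normsq_pe_pos[of p] by (auto simp: H3_def)

lemma Dq_nonneg: "p \<in> H3 \<Longrightarrow> q \<in> H3 \<Longrightarrow> Dq (cayley p) (cayley q) \<ge> 0"
  using rho_cayley_pos unfolding Dq_def by (simp add: divide_nonneg_pos)

lemma Dq_hdist:
  assumes "p \<in> H3" "q \<in> H3"
  shows "Dq (cayley p) (cayley q) = (cosh (hdist p q) - 1) / 2"
  using hdist_cayley[OF assms] Dq_nonneg[OF assms] by simp

lemma norm_cayley_lt: "p \<in> H3 \<Longrightarrow> norm (cayley p) < 1"
proof -
  assume "p \<in> H3"
  hence "(norm (cayley p))^2 < 1" using rho_cayley_pos[of p] unfolding rho_def by simp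
  thus ?thesis unfolding abs_square_less_1 by simp
qed

lemma rho_emb: "rho (emb_S x) = 0"
proof (cases x)
  case None then show ?thesis by (simp add: emb_S_def rho_def norm_Pair)
next
  case (Some z) then show ?thesis using rho_cayley[of "(z,0)"] by (simp add: emb_S_def)
qed

lemma norm_emb: "norm (emb_S x) = 1"
proof -
  have "(norm (emb_S x))^2 = 1" using rho_emb[of x] unfolding rho_def by simp
  thus ?thesis unfolding abs_square_eq_1 by simp
qed

lemma iota_inj:
  assumes "x \<noteq> 0" "y \<noteq> 0" "iota x = iota y" shows "x = y"
  using norm_iota_diff[OF assms(1,2)] assms by (simp add: field_simps)

lemma emb_inj: "emb_S x = emb_S y \<Longrightarrow> x = y"
proof -
  have c0: "cayley (z,0) \<noteq> (0,-1)" for z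
  proof
    assume "cayley (z,0) = (0,-1)"
    hence "iota ((z,0) + e0) = (0,-1) + e0" unfolding cayley_iota by (metis diff_add_cancel)
    hence "iota ((z,0) + e0) = 0" by (simp add: zero_prod_def)
    moreover have "(z,0) + e0 \<noteq> 0" using snd_pos_ne[of "(z,0)"] by simp
    ultimately show False unfolding iota_def by (auto simp: zero_prod_def)
  qed
  have ci: "cayley (z,0) = cayley (w,0) \<Longrightarrow> z = w" for z w
    using iota_inj[OF snd_pos_ne[of "(z,0)"] snd_pos_ne[of "(w,0)"]] unfolding cayley_iota by simp
  assume "emb_S x = emb_S y" thus "x = y" using c0 ci
    by (cases x; cases y) (auto simp: emb_S_def dest: sym)
qed

lemma emb_surj:
  assumes "norm X = 1" shows "\<exists>x. X = emb_S x"
proof (cases X)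
  case (Pair w s)
  have ws: "(cmod w)^2 + s^2 = 1" using assms Pair normsq_pt[of X] by simp
  show ?thesis
  proof (cases "s = -1")
    case True
    then have "w = 0" using ws by simp
    then show ?thesis using True Pair by (intro exI[of _ None]) (simp add: emb_S_def)
  next
    case False
    have "(cmod w)^2 \<ge> 0" by simp
    hence "s^2 \<le> 1" using ws by linarith
    hence "\<bar>s\<bar> \<le> 1" by (simp add: abs_square_le_1)
    hence s1: "1 + s > 0" using False by linarith
    define z where "z = w / complex_of_real (1 + s)"
    have n1: "cmod (complex_of_real (1+s)) = 1+s" using s1 unfolding norm_of_real by simp
    have "cmod z = cmod w / (1 + s)" by (simp only: z_def norm_divide n1)
    hence "(cmod z)^2 = (cmod w)^2 / (1 + s)^2" by (simp add: power_divide)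
    also have "\<dots> = (1 - s) * (1 + s) / ((1 + s) * (1 + s))" using ws
      by (simp add: power2_eq_square algebra_simps)
    finally have zz: "(cmod z)^2 = (1 - s) / (1 + s)" using s1 by simp
    have N: "(cmod z)^2 + 1 = 2 / (1 + s)" using zz s1 by (simp add: field_simps)
    have N2: "(cmod z)^2 + (0 + 1)^2 = 2 / (1 + s)" using N by simp
    have c1: "2 * z / complex_of_real (2 / (1 + s)) = w"
    proof -
      have nz: "1 + complex_of_real s \<noteq> 0"
        by (metis s1 of_real_1 of_real_add of_real_eq_0_iff less_irrefl)
      have nz2: "2 + complex_of_real s * 2 \<noteq> 0" using nz
        by (metis distrib_left mult.commute mult_1 mult_eq_0_iff zero_neq_numeral)
      show ?thesis unfolding z_def using nz nz2 by (simp add: field_simps)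
    qed
    have c2: "2 * (0 + 1) / (2 / (1 + s)) - 1 = s"
      using s1 by (simp add: field_simps)
    have "cayley (z, 0) = (w, s)"
      unfolding cayley_def Let_def fst_conv snd_conv N2 c1 c2 ..
    then show ?thesis using Pair by (intro exI[of _ "Some z"]) (simp add: emb_S_def)
  qed
qed


lemma limitin_pullback_eucl:
  "limitin (pullback_topology A f euclidean) s l F \<longleftrightarrow>
     l \<in> A \<and> eventually (\<lambda>x. s x \<in> A) F \<and> ((\<lambda>x. f (s x)) \<longlongrightarrow> f l) F"
proof
  assume L: "limitin (pullback_topology A f euclidean) s l F"
  have lA: "l \<in> A" using L unfolding limitin_def topspace_pullback_topology by auto
  have opA: "openin (pullback_topology A f euclidean) A"
    unfolding openin_pullback_topology by (intro exI[of _ UNIV]) auto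
  have evA: "eventually (\<lambda>x. s x \<in> A) F" using L opA lA unfolding limitin_def by auto
  have "((\<lambda>x. f (s x)) \<longlongrightarrow> f l) F"
  proof (rule topological_tendstoI)
    fix V assume V: "open V" "f l \<in> V"
    have "openin (pullback_topology A f euclidean) (f -` V \<inter> A)"
      unfolding openin_pullback_topology using V by auto
    hence "eventually (\<lambda>x. s x \<in> f -` V \<inter> A) F" using L V lA unfolding limitin_def by auto
    thus "eventually (\<lambda>x. f (s x) \<in> V) F" by (rule eventually_mono) auto
  qed
  thus "l \<in> A \<and> eventually (\<lambda>x. s x \<in> A) F \<and> ((\<lambda>x. f (s x)) \<longlongrightarrow> f l) F"
    using lA evA by auto
next
  assume R: "l \<in> A \<and> eventually (\<lambda>x. s x \<in> A) F \<and> ((\<lambda>x. f (s x)) \<longlongrightarrow> f l) F"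
  show "limitin (pullback_topology A f euclidean) s l F"
    unfolding limitin_def topspace_pullback_topology
  proof (intro conjI allI impI)
    show "l \<in> f -` topspace euclidean \<inter> A" using R by auto
    fix U assume U: "openin (pullback_topology A f euclidean) U \<and> l \<in> U"
    then obtain V where V: "open V" "U = f -` V \<inter> A" unfolding openin_pullback_topology by auto
    hence "f l \<in> V" using U by auto
    hence "eventually (\<lambda>x. f (s x) \<in> V) F" using R V topological_tendstoD by blast
    hence "eventually (\<lambda>x. f (s x) \<in> V \<and> s x \<in> A) F" using R eventually_conj by blast
    thus "eventually (\<lambda>x. s x \<in> U) F" unfolding V(2)
      by (rule eventually_mono) auto
  qed
qed

lemma limitin_cl:
  "limitin cl_top s l F \<longleftrightarrow>
     l \<in> cl_space \<and> eventually (\<lambda>x. s x \<in> cl_space) F \<and> ((\<lambda>x. cl_emb (s x)) \<longlongrightarrow> cl_emb l) F"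
  unfolding cl_top_def by (rule limitin_pullback_eucl)

lemma Inl_cl[simp]: "Inl p \<in> cl_space \<longleftrightarrow> p \<in> H3"
  unfolding cl_space_def by auto

lemma Inr_cl[simp]: "Inr x \<in> cl_space"
  unfolding cl_space_def by auto

lemma topspace_cl: "topspace cl_top = cl_space"
  unfolding cl_top_def topspace_pullback_topology by simp

lemma cont_H3:
  assumes "continuous_map cl_top cl_top (pair_map A a)" "p \<in> H3"
  shows "A p \<in> H3"
proof -
  have "Inl p \<in> topspace cl_top" using assms(2) topspace_cl by simp
  hence "pair_map A a (Inl p) \<in> pair_map A a ` topspace cl_top" by (rule imageI)
  hence "pair_map A a (Inl p) \<in> topspace cl_top"
    using continuous_map_image_subset_topspace[OF assms(1)] by blast
  thus ?thesis unfolding pair_map_def topspace_cl by simp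
qed

lemma LL_int_bd:
  assumes c: "continuous_map cl_top cl_top (pair_map A a)"
    and u: "\<And>j. u j \<in> H3" and lim: "(\<lambda>j. cayley (u j)) \<longlonglongrightarrow> emb_S x"
  shows "(\<lambda>j. cayley (A (u j))) \<longlonglongrightarrow> emb_S (a x)"
proof -
  have "limitin cl_top (\<lambda>j. Inl (u j)) (Inr x) sequentially"
    unfolding limitin_cl using u lim by (simp add: cl_emb_def)
  from continuous_map_limit[OF c this]
  show ?thesis unfolding limitin_cl by (simp add: cl_emb_def pair_map_def o_def)
qed

lemma LL_bd_bd:
  assumes c: "continuous_map cl_top cl_top (pair_map A a)"
    and lim: "(\<lambda>j. emb_S (y j)) \<longlonglongrightarrow> emb_S x"
  shows "(\<lambda>j. emb_S (a (y j))) \<longlonglongrightarrow> emb_S (a x)"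
proof -
  have "limitin cl_top (\<lambda>j. Inr (y j)) (Inr x) sequentially"
    unfolding limitin_cl using lim by (simp add: cl_emb_def)
  from continuous_map_limit[OF c this]
  show ?thesis unfolding limitin_cl by (simp add: cl_emb_def pair_map_def o_def)
qed

lemma LL_int_int:
  assumes c: "continuous_map cl_top cl_top (pair_map A a)"
    and u: "\<And>j. u j \<in> H3" "p \<in> H3" and lim: "(\<lambda>j. cayley (u j)) \<longlonglongrightarrow> cayley p"
  shows "(\<lambda>j. cayley (A (u j))) \<longlonglongrightarrow> cayley (A p)"
proof -
  have "limitin cl_top (\<lambda>j. Inl (u j)) (Inl p) sequentially"
    unfolding limitin_cl using u lim by (simp add: cl_emb_def)
  from continuous_map_limit[OF c this]
  show ?thesis unfolding limitin_cl by (simp add: cl_emb_def pair_map_def o_def)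
qed

lemma cayley_tendsto:
  assumes "(f \<longlongrightarrow> p) F" "snd p \<ge> 0"
  shows "((\<lambda>x. cayley (f x)) \<longlongrightarrow> cayley p) F"
proof -
  have N: "(cmod (fst p))^2 + (snd p + 1)^2 \<noteq> 0" using assms(2)
    by (smt (verit) zero_le_power2 one_le_power)
  have N': "complex_of_real ((cmod (fst p))^2 + (snd p + 1)^2) \<noteq> 0" using N by (metis of_real_eq_0_iff)
  have f1: "((\<lambda>x. fst (f x)) \<longlongrightarrow> fst p) F" "((\<lambda>x. snd (f x)) \<longlongrightarrow> snd p) F"
    using assms(1) by (auto intro: tendsto_fst tendsto_snd)
  have g: "((\<lambda>x. (cmod (fst (f x)))^2 + (snd (f x) + 1)^2) \<longlongrightarrow> (cmod (fst p))^2 + (snd p + 1)^2) F"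
    by (intro tendsto_add tendsto_power tendsto_norm f1 tendsto_const)
  have "((\<lambda>x. (2 * fst (f x) / complex_of_real ((cmod (fst (f x)))^2 + (snd (f x) + 1)^2),
      2 * (snd (f x) + 1) / ((cmod (fst (f x)))^2 + (snd (f x) + 1)^2) - 1)) \<longlongrightarrow>
      (2 * fst p / complex_of_real ((cmod (fst p))^2 + (snd p + 1)^2),
      2 * (snd p + 1) / ((cmod (fst p))^2 + (snd p + 1)^2) - 1)) F"
    by (intro tendsto_Pair tendsto_divide tendsto_mult tendsto_const tendsto_of_real tendsto_diff
        tendsto_add f1 g N N')
  thus ?thesis unfolding cayley_def Let_def .
qed

lemma approx_seq: "\<exists>u. (\<forall>j. u j \<in> H3) \<and> (\<lambda>j. cayley (u j)) \<longlonglongrightarrow> emb_S x"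
proof (cases x)
  case None
  define u where "u j = ((0::complex), real (Suc j))" for j
  have r: "2 * r / r^2 = 2 * inverse r" if "r > 0" for r :: real
    using that by (simp add: power2_eq_square divide_inverse)
  have "cayley (u j) = (0, 2 * inverse (real (Suc (Suc j))) - 1)" for j
  proof -
    have e: "real (Suc j) + 1 = real (Suc (Suc j))" by simp
    show ?thesis unfolding cayley_def Let_def u_def fst_conv snd_conv e
      using r[of "real (Suc (Suc j))"] by simp
  qed
  moreover have "(\<lambda>j. ((0::complex), 2 * inverse (real (Suc (Suc j))) - 1)) \<longlonglongrightarrow> (0, 2 * 0 - 1)"
    by (intro tendsto_Pair tendsto_const tendsto_diff tendsto_mult LIMSEQ_Suc[OF LIMSEQ_inverse_real_of_nat])
  ultimately show ?thesis using None
    by (intro exI[of _ u]) (simp add: u_def H3_def emb_S_def)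
next
  case (Some z)
  define u where "u j = (z, inverse (real (Suc j)))" for j
  have "u \<longlonglongrightarrow> (z, 0)" unfolding u_def
    by (intro tendsto_Pair tendsto_const LIMSEQ_inverse_real_of_nat)
  from cayley_tendsto[OF this] show ?thesis using Some
    by (intro exI[of _ u]) (simp add: u_def H3_def emb_S_def)
qed


lemma Phi_Dq:
  assumes "rho P > 0" "rho U > 0" "rho V > 0"
  shows "Phi U V P = Dq P U * Dq P V / Dq U V"
proof (cases "norm (U - V) = 0")
  case True then show ?thesis unfolding Phi_def Dq_def by simp
next
  case False then show ?thesis unfolding Phi_def Dq_def using assms
    by (simp add: field_simps power2_eq_square)
qed

lemma Phi_self[simp]: "Phi X X P = 0"
  unfolding Phi_def by simp

lemma Phi_inv_int:
  assumes pres: "\<forall>p\<in>H3. \<forall>q\<in>H3. hdist (A p) (A q) = hdist p q"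
    and AH: "\<And>p. p \<in> H3 \<Longrightarrow> A p \<in> H3"
    and uvq: "u \<in> H3" "v \<in> H3" "q \<in> H3"
  shows "Phi (cayley (A u)) (cayley (A v)) (cayley (A q)) = Phi (cayley u) (cayley v) (cayley q)"
proof -
  have D: "Dq (cayley (A s)) (cayley (A t)) = Dq (cayley s) (cayley t)" if "s \<in> H3" "t \<in> H3" for s t
    using Dq_hdist[of "A s" "A t"] Dq_hdist[of s t] pres that AH by simp
  show ?thesis
    using Phi_Dq[of "cayley (A q)" "cayley (A u)" "cayley (A v)"]
      Phi_Dq[of "cayley q" "cayley u" "cayley v"] rho_cayley_pos AH uvq D by simp
qed

lemma rho_tendsto: "(f \<longlongrightarrow> P) F \<Longrightarrow> ((\<lambda>x. rho (f x)) \<longlongrightarrow> rho P) F"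
  unfolding rho_def by (intro tendsto_diff tendsto_const tendsto_power tendsto_norm)

lemma Phi_tendsto:
  assumes "(X \<longlongrightarrow> X0) F" "(Y \<longlongrightarrow> Y0) F" "(P \<longlongrightarrow> P0) F" "X0 \<noteq> Y0" "rho P0 \<noteq> 0"
  shows "((\<lambda>j. Phi (X j) (Y j) (P j)) \<longlongrightarrow> Phi X0 Y0 P0) F"
  unfolding Phi_def using assms
  by (intro tendsto_divide tendsto_mult tendsto_power tendsto_norm tendsto_diff rho_tendsto) auto

lemma pair_map_id: "pair_map id id = id"
  by (auto simp: pair_map_def fun_eq_iff split: sum.split)

lemma pair_map_comp: "pair_map (A \<circ> B) (a \<circ> b) = pair_map A a \<circ> pair_map B b"
  by (auto simp: pair_map_def fun_eq_iff split: sum.split)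

lemma transfer:
  assumes cA: "continuous_map cl_top cl_top (pair_map A a)"
    and cB: "continuous_map cl_top cl_top (pair_map B b)"
    and ia: "inj a" and ib: "inj b" and q: "q \<in> H3"
    and int: "\<And>u v. u \<in> H3 \<Longrightarrow> v \<in> H3 \<Longrightarrow>
       Phi (cayley (A u)) (cayley (A v)) (cayley (A q)) = Phi (cayley (B u)) (cayley (B v)) (cayley (B q))"
  shows "Phi (emb_S (a x)) (emb_S (a y)) (cayley (A q)) = Phi (emb_S (b x)) (emb_S (b y)) (cayley (B q))"
proof (cases "x = y")
  case True then show ?thesis by simp
next
  case False
  obtain u where u: "\<And>j. u j \<in> H3" "(\<lambda>j. cayley (u j)) \<longlonglongrightarrow> emb_S x" using approx_seq by blast
  obtain v where v: "\<And>j. v j \<in> H3" "(\<lambda>j. cayley (v j)) \<longlonglongrightarrow> emb_S y" using approx_seq by blast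
  have l1: "(\<lambda>j. Phi (cayley (A (u j))) (cayley (A (v j))) (cayley (A q))) \<longlonglongrightarrow>
      Phi (emb_S (a x)) (emb_S (a y)) (cayley (A q))"
    apply (rule Phi_tendsto[OF LL_int_bd[OF cA u] LL_int_bd[OF cA v] tendsto_const])
    subgoal proof
      assume "emb_S (a x) = emb_S (a y)"
      hence "a x = a y" by (rule emb_inj)
      hence "x = y" by (rule injD[OF ia])
      thus False using False by contradiction
    qed
    subgoal using rho_cayley_pos[OF cont_H3[OF cA q]] by simp
    done
  have l2: "(\<lambda>j. Phi (cayley (B (u j))) (cayley (B (v j))) (cayley (B q))) \<longlonglongrightarrow>
      Phi (emb_S (b x)) (emb_S (b y)) (cayley (B q))"
    apply (rule Phi_tendsto[OF LL_int_bd[OF cB u] LL_int_bd[OF cB v] tendsto_const])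
    subgoal proof
      assume "emb_S (b x) = emb_S (b y)"
      hence "b x = b y" by (rule emb_inj)
      hence "x = y" by (rule injD[OF ib])
      thus False using False by contradiction
    qed
    subgoal using rho_cayley_pos[OF cont_H3[OF cB q]] by simp
    done
  have "(\<lambda>j. Phi (cayley (A (u j))) (cayley (A (v j))) (cayley (A q))) =
        (\<lambda>j. Phi (cayley (B (u j))) (cayley (B (v j))) (cayley (B q)))"
    by (rule ext) (rule int[OF u(1) v(1)])
  with l1 have "(\<lambda>j. Phi (cayley (B (u j))) (cayley (B (v j))) (cayley (B q))) \<longlonglongrightarrow>
      Phi (emb_S (a x)) (emb_S (a y)) (cayley (A q))" by simp
  from LIMSEQ_unique[OF this l2] show ?thesis .
qed

lemma Isom_H3: "(G, g) \<in> Isom \<Longrightarrow> p \<in> H3 \<Longrightarrow> G p \<in> H3"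
proof -
  assume "(G, g) \<in> Isom" "p \<in> H3"
  hence "bij_betw G H3 H3" by (simp add: Isom_def)
  thus ?thesis using \<open>p \<in> H3\<close> by (rule bij_betw_apply)
qed

lemma BI:
  assumes "(G, g) \<in> Isom" "q \<in> H3"
  shows "Phi (emb_S (g x)) (emb_S (g y)) (cayley (G q)) = Phi (emb_S x) (emb_S y) (cayley q)"
proof -
  have c: "continuous_map cl_top cl_top (pair_map G g)" "bij g"
    and pres: "\<forall>p\<in>H3. \<forall>q\<in>H3. hdist (G p) (G q) = hdist p q"
    using assms unfolding Isom_def by auto
  have cid: "continuous_map cl_top cl_top (pair_map id id)" unfolding pair_map_id by simp
  have "Phi (emb_S (g x)) (emb_S (g y)) (cayley (G q)) = Phi (emb_S (id x)) (emb_S (id y)) (cayley (id q))"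
    by (rule transfer[OF c(1) cid bij_is_inj[OF c(2)] inj_on_id assms(2)])
       (simp only: id_apply, rule Phi_inv_int[OF pres Isom_H3[OF assms(1)]], assumption+, rule assms(2))
  thus ?thesis by simp
qed


lemma EQ:
  assumes cH: "continuous_map cl_top cl_top (pair_map H h)" and ih: "inj h"
    and G: "(G, g) \<in> Isom"
    and pres: "\<forall>p\<in>H3. \<forall>q\<in>H3. hdist (G' p) (G' q) = hdist p q"
    and G'H3: "\<And>p. p \<in> H3 \<Longrightarrow> G' p \<in> H3"
    and comm: "\<And>u. u \<in> H3 \<Longrightarrow> G' (H u) = H (G u)"
    and k: "k \<in> H3"
  shows "Phi (emb_S (h (g x))) (emb_S (h (g y))) (cayley (H (G k))) =
         Phi (emb_S (h x)) (emb_S (h y)) (cayley (H k))"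
proof -
  have cG: "continuous_map cl_top cl_top (pair_map G g)" and bg: "bij g"
    using G unfolding Isom_def by auto
  have cHG: "continuous_map cl_top cl_top (pair_map (H \<circ> G) (h \<circ> g))"
    unfolding pair_map_comp by (rule continuous_map_compose[OF cG cH])
  have inj: "inj (h \<circ> g)" using ih bij_is_inj[OF bg] by (rule inj_compose)
  have HH3: "\<And>u. u \<in> H3 \<Longrightarrow> H u \<in> H3" using cont_H3[OF cH] .
  have "Phi (emb_S ((h \<circ> g) x)) (emb_S ((h \<circ> g) y)) (cayley ((H \<circ> G) k)) =
        Phi (emb_S (h x)) (emb_S (h y)) (cayley (H k))"
  proof (rule transfer[OF cHG cH inj ih k])
    fix u v assume uv: "u \<in> H3" "v \<in> H3"
    have "Phi (cayley ((H \<circ> G) u)) (cayley ((H \<circ> G) v)) (cayley ((H \<circ> G) k)) =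
          Phi (cayley (G' (H u))) (cayley (G' (H v))) (cayley (G' (H k)))"
      using comm uv k by simp
    also have "\<dots> = Phi (cayley (H u)) (cayley (H v)) (cayley (H k))"
      by (rule Phi_inv_int[OF pres G'H3 HH3[OF uv(1)] HH3[OF uv(2)] HH3[OF k]])
    finally show "Phi (cayley ((H \<circ> G) u)) (cayley ((H \<circ> G) v)) (cayley ((H \<circ> G) k)) =
          Phi (cayley (H u)) (cayley (H v)) (cayley (H k))" .
  qed
  thus ?thesis by simp
qed

lemma Isom_inj:
  assumes "(G, g) \<in> Isom" shows "inj G"
proof (rule injI)
  fix x y assume e: "G x = G y"
  have b: "bij_betw G H3 H3" and off: "\<forall>x. x \<notin> H3 \<longrightarrow> G x = x"
    using assms unfolding Isom_def by auto
  show "x = y"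
  proof (cases "x \<in> H3"; cases "y \<in> H3")
    assume "x \<in> H3" "y \<in> H3" thus ?thesis using e b by (metis bij_betw_imp_inj_on inj_onD)
  next
    assume "x \<in> H3" "y \<notin> H3" thus ?thesis using e b off by (metis bij_betw_apply)
  next
    assume "x \<notin> H3" "y \<in> H3" thus ?thesis using e b off by (metis bij_betw_apply)
  next
    assume "x \<notin> H3" "y \<notin> H3" thus ?thesis using e off by metis
  qed
qed

lemma reduction:
  assumes cH: "continuous_map cl_top cl_top (pair_map H h)" and bh: "bij h"
    and injH: "inj_on H H3"
    and G1: "\<Gamma>1 \<subseteq> Isom" and G2: "\<Gamma>2 \<subseteq> Isom"
    and inv1: "\<forall>(G, g)\<in>\<Gamma>1. (inv G, inv g) \<in> \<Gamma>1"
    and eqv: "(\<lambda>G. \<lambda>p. if p \<in> H3 then H (G (inv_into H3 H p)) else p) ` (fst ` \<Gamma>1) = fst ` \<Gamma>2"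
    and K1: "K1 \<subseteq> H3" "(\<Union>\<gamma>\<in>\<Gamma>1. fst \<gamma> ` K1) = H3"
    and f: "f \<in> Isom" and g: "g \<in> Isom" and p: "p \<in> H3"
  shows "\<exists>x' y' k. k \<in> K1 \<and> Phi (emb_S x') (emb_S y') (cayley k) = Phi (emb_S a) (emb_S b) (cayley p) \<and>
     Phi (emb_S (snd f (h (snd g a)))) (emb_S (snd f (h (snd g b)))) (cayley (fst f (H (fst g p))))
       = Phi (emb_S (h x')) (emb_S (h y')) (cayley (H k))"
proof -
  obtain F fh where fF: "f = (F, fh)" by (cases f)
  obtain G gh where gG: "g = (G, gh)" by (cases g)
  have Gp: "G p \<in> H3" using Isom_H3 g gG p by simp
  then obtain \<gamma> k where \<gamma>: "\<gamma> \<in> \<Gamma>1" and k: "k \<in> K1" and Gpk: "G p = fst \<gamma> k"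
    using K1(2) by blast
  obtain Gm gm where gm: "\<gamma> = (Gm, gm)" by (cases \<gamma>)
  have gmI: "(Gm, gm) \<in> Isom" using \<gamma> gm G1 by auto
  have gmiI: "(inv Gm, inv gm) \<in> Isom" using inv1 \<gamma> gm G1 by auto
  have kH: "k \<in> H3" using k K1(1) by auto
  have bgm: "bij gm" using gmI unfolding Isom_def by auto
  define x' where "x' = inv gm (gh a)"
  define y' where "y' = inv gm (gh b)"
  have GpGm: "G p = Gm k" using Gpk gm by simp
  have GmkH: "Gm k \<in> H3" using Isom_H3[OF gmI kH] .
  have s1: "Phi (emb_S x') (emb_S y') (cayley k) = Phi (emb_S (gh a)) (emb_S (gh b)) (cayley (Gm k))"
  proof -
    have "inv Gm (Gm k) = k" using Isom_inj[OF gmI] by (simp add: inv_f_f)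
    thus ?thesis using BI[OF gmiI GmkH, of "gh a" "gh b"] unfolding x'_def y'_def by simp
  qed
  also have "\<dots> = Phi (emb_S a) (emb_S b) (cayley p)"
    using BI[OF g[unfolded gG] p, of a b] GpGm by simp
  finally have s12: "Phi (emb_S x') (emb_S y') (cayley k) = Phi (emb_S a) (emb_S b) (cayley p)" .
  have HGp: "H (G p) \<in> H3" using cont_H3[OF cH Gp] .
  have s3: "Phi (emb_S (fh (h (gh a)))) (emb_S (fh (h (gh b)))) (cayley (F (H (G p))))
     = Phi (emb_S (h (gh a))) (emb_S (h (gh b))) (cayley (H (G p)))"
    using BI[OF f[unfolded fF] HGp] .
  have ga: "gh a = gm x'" "gh b = gm y'" unfolding x'_def y'_def
    using bgm by (simp_all add: bij_is_surj surj_f_inv_f)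
  define G' where "G' = (\<lambda>p. if p \<in> H3 then H (Gm (inv_into H3 H p)) else p)"
  have "G' \<in> fst ` \<Gamma>2" unfolding G'_def eqv[symmetric] using \<gamma> gm by force
  then obtain g2 where g2: "(G', g2) \<in> Isom" using G2 by force
  have pres: "\<forall>p\<in>H3. \<forall>q\<in>H3. hdist (G' p) (G' q) = hdist p q" using g2 unfolding Isom_def by auto
  have comm: "G' (H u) = H (Gm u)" if "u \<in> H3" for u
  proof -
    have "H u \<in> H3" using cont_H3[OF cH that] .
    thus ?thesis unfolding G'_def using inv_into_f_f[OF injH that] by simp
  qed
  have s4: "Phi (emb_S (h (gm x'))) (emb_S (h (gm y'))) (cayley (H (Gm k))) =
         Phi (emb_S (h x')) (emb_S (h y')) (cayley (H k))"
    by (rule EQ[OF cH bij_is_inj[OF bh] gmI pres Isom_H3[OF g2] comm kH])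
  show ?thesis
    apply (rule exI[of _ x'], rule exI[of _ y'], rule exI[of _ k])
    using k s12 s3 s4 ga GpGm fF gG by simp
qed


lemma cayley_cont: "K \<subseteq> H3 \<Longrightarrow> continuous_on K cayley"
  unfolding continuous_on_def
proof (intro ballI)
  fix x assume "K \<subseteq> H3" "x \<in> K"
  hence "snd x \<ge> 0" by (auto simp: H3_def)
  from cayley_tendsto[OF tendsto_ident_at this, of K] show "(cayley \<longlongrightarrow> cayley x) (at x within K)" .
qed

lemma Phi_lim_ne:
  assumes X: "X \<longlonglongrightarrow> X0" and Y: "Y \<longlonglongrightarrow> Y0" and P: "P \<longlonglongrightarrow> P0"
    and eq: "\<And>j. Phi (X j) (Y j) (P j) = m" and m: "m > 0"
    and nP: "norm P0 < 1" and nX: "norm X0 = 1"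
  shows "X0 \<noteq> Y0"
proof
  assume XY: "X0 = Y0"
  have e: "(norm (P j - X j))^2 * (norm (P j - Y j))^2 = m * ((rho (P j))^2 * (norm (X j - Y j))^2)" for j
  proof -
    have "(rho (P j))^2 * (norm (X j - Y j))^2 \<noteq> 0"
    proof
      assume "(rho (P j))^2 * (norm (X j - Y j))^2 = 0"
      hence "Phi (X j) (Y j) (P j) = 0" unfolding Phi_def by simp
      thus False using eq m by simp
    qed
    thus ?thesis using eq[of j] unfolding Phi_def by (simp add: field_simps)
  qed
  have l1: "(\<lambda>j. (norm (P j - X j))^2 * (norm (P j - Y j))^2) \<longlonglongrightarrow> (norm (P0 - X0))^2 * (norm (P0 - Y0))^2"
    by (intro tendsto_intros X Y P)
  have l2: "(\<lambda>j. m * ((rho (P j))^2 * (norm (X j - Y j))^2)) \<longlonglongrightarrow> m * ((rho P0)^2 * (norm (X0 - Y0))^2)"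
    by (intro tendsto_intros X Y P rho_tendsto)
  have "(norm (P0 - X0))^2 * (norm (P0 - Y0))^2 = m * ((rho P0)^2 * (norm (X0 - Y0))^2)"
    using LIMSEQ_unique[OF l1] l2 e by simp
  hence "(norm (P0 - X0))^2 * (norm (P0 - X0))^2 = 0" using XY by simp
  hence "P0 = X0" by simp
  thus False using nP nX by simp
qed

lemma C_bound:
  assumes cH: "continuous_map cl_top cl_top (pair_map H h)" and ih: "inj h"
    and cK: "compact K1" and K1: "K1 \<subseteq> H3"
    and k: "\<And>n. k n \<in> K1" and eq: "\<And>n. Phi (emb_S (x n)) (emb_S (y n)) (cayley (k n)) = m"
    and m: "m > 0"
  shows "\<exists>B. \<forall>n. Phi (emb_S (h (x n))) (emb_S (h (y n))) (cayley (H (k n))) \<le> B"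
proof (rule ccontr)
  define V where "V n = Phi (emb_S (h (x n))) (emb_S (h (y n))) (cayley (H (k n)))" for n
  assume "\<not> (\<exists>B. \<forall>n. Phi (emb_S (h (x n))) (emb_S (h (y n))) (cayley (H (k n))) \<le> B)"
  hence "\<forall>j::nat. \<exists>n. V n > real j" unfolding V_def by (meson not_le)
  then obtain \<sigma> where \<sigma>: "\<And>j. V (\<sigma> j) > real j" by metis
  define S where "S = sphere (0::pt) 1 \<times> sphere (0::pt) 1 \<times> cayley ` K1"
  have cS: "compact S" unfolding S_def
    by (intro compact_Times compact_sphere compact_continuous_image cayley_cont K1 cK)
  define t where "t j = (emb_S (x (\<sigma> j)), emb_S (y (\<sigma> j)), cayley (k (\<sigma> j)))" for j
  have tS: "\<forall>j. t j \<in> S" unfolding t_def S_def using k norm_emb by auto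
  obtain l r where lS: "l \<in> S" and r: "strict_mono r" and lim: "(t \<circ> r) \<longlonglongrightarrow> l"
    using seq_compactE[OF compact_imp_seq_compact[OF cS] tS] by blast
  obtain X Y P where lXYP: "l = (X, Y, P)" by (cases l) auto
  have nX: "norm X = 1" and nY: "norm Y = 1" and PK: "P \<in> cayley ` K1" using lS lXYP S_def by auto
  then obtain k0 where k0: "k0 \<in> K1" "P = cayley k0" by auto
  obtain x0 where x0: "X = emb_S x0" using emb_surj[OF nX] by auto
  obtain y0 where y0: "Y = emb_S y0" using emb_surj[OF nY] by auto
  have lX: "(\<lambda>j. emb_S (x (\<sigma> (r j)))) \<longlonglongrightarrow> X"
    using tendsto_fst[OF lim] lXYP by (simp add: t_def o_def)
  have lY: "(\<lambda>j. emb_S (y (\<sigma> (r j)))) \<longlonglongrightarrow> Y"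
    using tendsto_fst[OF tendsto_snd[OF lim]] lXYP by (simp add: t_def o_def)
  have lP: "(\<lambda>j. cayley (k (\<sigma> (r j)))) \<longlonglongrightarrow> P"
    using tendsto_snd[OF tendsto_snd[OF lim]] lXYP by (simp add: t_def o_def)
  have k0H: "k0 \<in> H3" using k0 K1 by auto
  have "X \<noteq> Y"
    by (rule Phi_lim_ne[OF lX lY lP eq m _ nX]) (simp add: k0 norm_cayley_lt[OF k0H])
  hence "x0 \<noteq> y0" using x0 y0 by auto
  hence hne: "emb_S (h x0) \<noteq> emb_S (h y0)" using ih emb_inj by (metis injD)
  have kH: "\<And>j. k (\<sigma> (r j)) \<in> H3" using k K1 by auto
  have "(\<lambda>j. V (\<sigma> (r j))) \<longlonglongrightarrow> Phi (emb_S (h x0)) (emb_S (h y0)) (cayley (H k0))"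
    unfolding V_def
    apply (rule Phi_tendsto[OF LL_bd_bd[OF cH] LL_bd_bd[OF cH] LL_int_int[OF cH kH k0H]])
    using lX lY lP x0 y0 k0 hne rho_cayley_pos[OF cont_H3[OF cH k0H]] by auto
  hence "Bseq (\<lambda>j. V (\<sigma> (r j)))" by (intro convergent_imp_Bseq convergentI)
  then obtain B where B: "\<And>j. norm (V (\<sigma> (r j))) \<le> B" by (auto simp: Bseq_def)
  obtain j :: nat where j: "real j > B" using reals_Archimedean2 by blast
  have "real j \<le> real (r j)" using seq_suble[OF r] by simp
  hence "V (\<sigma> (r j)) > B" using \<sigma>[of "r j"] j by linarith
  thus False using B[of j] by simp
qed


lemma pair_lower:
  assumes nX: "norm X \<le> 1" and nY: "norm Y \<le> 1" and XY: "X \<noteq> Y" and rW: "rho W > 0"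
    and Ph: "Phi X Y W \<le> M" and d: "\<delta> > 0" "norm (W - X) \<ge> \<delta>/2" "norm (W - Y) \<ge> \<delta>/2"
  shows "\<delta>^4 / 64 \<le> M * (rho W)^2"
proof -
  have nXY: "norm (X - Y) \<le> 2" using norm_triangle_ineq4[of X Y] nX nY by linarith
  have pXY: "norm (X - Y) > 0" using XY by simp
  have den: "(rho W)^2 * (norm (X - Y))^2 > 0" using rW pXY by simp
  have num: "(norm (W - X))^2 * (norm (W - Y))^2 \<le> M * ((rho W)^2 * (norm (X - Y))^2)"
    using Ph den unfolding Phi_def by (simp add: pos_divide_le_eq)
  have M0: "M \<ge> 0" using Ph den unfolding Phi_def
    by (smt (verit) divide_nonneg_pos mult_nonneg_nonneg zero_le_power2)
  have "(\<delta>/2)^2 * (\<delta>/2)^2 \<le> (norm (W - X))^2 * (norm (W - Y))^2"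
    using d by (intro mult_mono power_mono) auto
  also have "\<dots> \<le> M * ((rho W)^2 * (norm (X - Y))^2)" by (rule num)
  also have "\<dots> \<le> M * ((rho W)^2 * 2^2)"
    using nXY M0 by (intro mult_left_mono power_mono) auto
  moreover have "(\<delta>/2)^2 * (\<delta>/2)^2 = \<delta>^4 / 16" by (simp add: power2_eq_square field_simps power4_eq_xxxx)
  ultimately have "\<delta>^4 / 16 \<le> M * ((rho W)^2 * 2^2)" by linarith
  thus ?thesis by simp
qed

lemma triple_lower:
  assumes n: "norm X \<le> 1" "norm Y \<le> 1" "norm Z \<le> 1" and rW: "rho W > 0" and d: "\<delta> > 0"
    and dXY: "norm (X - Y) \<ge> \<delta>" and dXZ: "norm (X - Z) \<ge> \<delta>" and dYZ: "norm (Y - Z) \<ge> \<delta>"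
    and P1: "Phi X Y W \<le> M" and P2: "Phi X Z W \<le> M" and P3: "Phi Y Z W \<le> M"
  shows "\<delta>^4 / 64 \<le> M * (rho W)^2"
proof -
  have ne: "X \<noteq> Y" "X \<noteq> Z" "Y \<noteq> Z" using dXY dXZ dYZ d by auto
  have t: "norm (A - B) \<le> norm (W - A) + norm (W - B)" for A B :: pt
    using norm_triangle_ineq4[of "W - B" "W - A"] by (simp add: norm_minus_commute)
  show ?thesis
  proof (cases "norm (W - X) \<ge> \<delta>/2")
    case True
    show ?thesis
    proof (cases "norm (W - Y) \<ge> \<delta>/2")
      case True2: True
      show ?thesis by (rule pair_lower[OF n(1,2) ne(1) rW P1 d True True2])
    next
      case False
      hence "norm (W - Z) \<ge> \<delta>/2" using t[of Y Z] dYZ by linarith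
      thus ?thesis by (rule pair_lower[OF n(1,3) ne(2) rW P2 d True])
    qed
  next
    case False
    hence "norm (W - Y) \<ge> \<delta>/2" "norm (W - Z) \<ge> \<delta>/2" using t[of X Y] t[of X Z] dXY dXZ by linarith+
    thus ?thesis by (intro pair_lower[OF n(2,3) ne(3) rW P3 d])
  qed
qed

lemma pos_inf:
  fixes s :: "nat \<Rightarrow> real"
  assumes pos: "\<And>n. s n > 0" and lim: "s \<longlonglongrightarrow> L" and L: "L > 0"
  shows "\<exists>\<delta>>0. \<forall>n. \<delta> \<le> s n"
proof -
  have "eventually (\<lambda>n. L/2 < s n) sequentially" using order_tendstoD(1)[OF lim, of "L/2"] L by simp
  then obtain N where N: "\<And>n. n \<ge> N \<Longrightarrow> L/2 < s n" by (auto simp: eventually_sequentially)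
  define \<delta> where "\<delta> = Min (insert (L/2) (s ` {..<N}))"
  have fin: "finite (insert (L/2) (s ` {..<N}))" by simp
  have "\<delta> > 0" unfolding \<delta>_def using fin L pos by (subst Min_gr_iff) auto
  moreover have "\<delta> \<le> s n" for n
  proof (cases "n < N")
    case True thus ?thesis unfolding \<delta>_def using fin by (intro Min_le) auto
  next
    case False
    hence "\<delta> \<le> L/2" unfolding \<delta>_def using fin by (intro Min_le) auto
    thus ?thesis using N[of n] False by linarith
  qed
  ultimately show ?thesis by blast
qed

lemma Phi_pos:
  assumes "p \<in> H3" "a \<noteq> b"
  shows "Phi (emb_S a) (emb_S b) (cayley p) > 0"
proof -
  have "cayley p \<noteq> emb_S a" "cayley p \<noteq> emb_S b" using norm_cayley_lt[OF assms(1)] norm_emb[of a] norm_emb[of b] by auto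
  moreover have "emb_S a \<noteq> emb_S b" using assms(2) emb_inj by metis
  moreover have "rho (cayley p) > 0" using rho_cayley_pos[OF assms(1)] .
  ultimately show ?thesis unfolding Phi_def by simp
qed

lemma pair_bound:
  assumes cH: "continuous_map cl_top cl_top (pair_map H h)" and bh: "bij h"
    and injH: "inj_on H H3"
    and G1: "\<Gamma>1 \<subseteq> Isom" and G2: "\<Gamma>2 \<subseteq> Isom"
    and inv1: "\<forall>(G, g)\<in>\<Gamma>1. (inv G, inv g) \<in> \<Gamma>1"
    and eqv: "(\<lambda>G. \<lambda>p. if p \<in> H3 then H (G (inv_into H3 H p)) else p) ` (fst ` \<Gamma>1) = fst ` \<Gamma>2"
    and K1: "K1 \<subseteq> H3" "compact K1" "(\<Union>\<gamma>\<in>\<Gamma>1. fst \<gamma> ` K1) = H3"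
    and fg: "\<And>n. fs n \<in> Isom" "\<And>n. gs n \<in> Isom" and p: "p \<in> H3" and ab: "a \<noteq> b"
  shows "\<exists>B. \<forall>n. Phi (emb_S (snd (fs n) (h (snd (gs n) a)))) (emb_S (snd (fs n) (h (snd (gs n) b))))
     (cayley (fst (fs n) (H (fst (gs n) p)))) \<le> B"
proof -
  define m where "m = Phi (emb_S a) (emb_S b) (cayley p)"
  have "\<forall>n. \<exists>x' y' k. k \<in> K1 \<and> Phi (emb_S x') (emb_S y') (cayley k) = m \<and>
     Phi (emb_S (snd (fs n) (h (snd (gs n) a)))) (emb_S (snd (fs n) (h (snd (gs n) b)))) (cayley (fst (fs n) (H (fst (gs n) p))))
       = Phi (emb_S (h x')) (emb_S (h y')) (cayley (H k))"
    unfolding m_def using reduction[OF cH bh injH G1 G2 inv1 eqv K1(1) K1(3) fg(1) fg(2) p] by blast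
  then obtain x y k where xyk: "\<And>n. k n \<in> K1" "\<And>n. Phi (emb_S (x n)) (emb_S (y n)) (cayley (k n)) = m"
    "\<And>n. Phi (emb_S (snd (fs n) (h (snd (gs n) a)))) (emb_S (snd (fs n) (h (snd (gs n) b)))) (cayley (fst (fs n) (H (fst (gs n) p))))
       = Phi (emb_S (h (x n))) (emb_S (h (y n))) (cayley (H (k n)))"
    by metis
  have "m > 0" unfolding m_def using Phi_pos[OF p ab] .
  from C_bound[OF cH bij_is_inj[OF bh] K1(2) K1(1) xyk(1) xyk(2) this]
  show ?thesis unfolding xyk(3) .
qed


lemma Isom_bij_snd: "f \<in> Isom \<Longrightarrow> bij (snd f)"
  unfolding Isom_def by auto

lemma Isom_H3': "f \<in> Isom \<Longrightarrow> p \<in> H3 \<Longrightarrow> fst f p \<in> H3"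
  using Isom_H3[of "fst f" "snd f"] by simp

theorem lemma1p3:
  fixes H :: "pt \<Rightarrow> pt" and h :: "sphere \<Rightarrow> sphere"
    and Hs :: "nat \<Rightarrow> pt \<Rightarrow> pt" and hs :: "nat \<Rightarrow> sphere \<Rightarrow> sphere"
    and a b c \<alpha> \<beta> \<gamma> :: sphere
  assumes "equivariant_pair H h"
    and "derived Hs hs H h"
    and "a \<noteq> b" "a \<noteq> c" "b \<noteq> c"
    and "S_conv (\<lambda>n. hs n a) \<alpha>" "S_conv (\<lambda>n. hs n b) \<beta>" "S_conv (\<lambda>n. hs n c) \<gamma>"
    and "\<alpha> \<noteq> \<beta>" "\<alpha> \<noteq> \<gamma>" "\<beta> \<noteq> \<gamma>"
  shows "tame Hs"
proof -
  obtain Kb where bl: "bi_lipschitz Kb H" using assms(1) unfolding equivariant_pair_def by auto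
  have bH: "bij_betw H H3 H3" using bl unfolding bi_lipschitz_def by auto
  have injH: "inj_on H H3" using bH by (rule bij_betw_imp_inj_on)
  have bh: "bij h" and cH: "continuous_map cl_top cl_top (pair_map H h)"
    using assms(1) unfolding equivariant_pair_def by auto
  obtain \<Gamma>1 \<Gamma>2 where n1: "nice_lattice \<Gamma>1" and n2: "nice_lattice \<Gamma>2"
    and eqv: "(\<lambda>G. \<lambda>p. if p \<in> H3 then H (G (inv_into H3 H p)) else p) ` (fst ` \<Gamma>1) = fst ` \<Gamma>2"
    using assms(1) unfolding equivariant_pair_def by (elim conjE exE) (rule that; assumption)
  have G1: "\<Gamma>1 \<subseteq> Isom" and inv1: "\<forall>(G, g)\<in>\<Gamma>1. (inv G, inv g) \<in> \<Gamma>1"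
    using n1 unfolding nice_lattice_def by auto
  have G2: "\<Gamma>2 \<subseteq> Isom" using n2 unfolding nice_lattice_def by auto
  obtain K1 where K1: "K1 \<subseteq> H3" "compact K1" "(\<Union>\<gamma>\<in>\<Gamma>1. fst \<gamma> ` K1) = H3"
    using n1 unfolding nice_lattice_def by auto
  have "\<forall>n. \<exists>f\<in>Isom. \<exists>g\<in>Isom.
      (\<forall>p\<in>H3. Hs n p = fst f (H (fst g p))) \<and> hs n = snd f \<circ> h \<circ> snd g"
    using assms(2) unfolding derived_def .
  hence "\<forall>n. \<exists>f. f \<in> Isom \<and> (\<exists>g\<in>Isom.
      (\<forall>p\<in>H3. Hs n p = fst f (H (fst g p))) \<and> hs n = snd f \<circ> h \<circ> snd g)"
    unfolding Bex_def .
  then obtain fs where fs: "\<And>n. fs n \<in> Isom \<and> (\<exists>g\<in>Isom.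
      (\<forall>p\<in>H3. Hs n p = fst (fs n) (H (fst g p))) \<and> hs n = snd (fs n) \<circ> h \<circ> snd g)"
    using choice[of "\<lambda>n f. f \<in> Isom \<and> (\<exists>g\<in>Isom.
      (\<forall>p\<in>H3. Hs n p = fst f (H (fst g p))) \<and> hs n = snd f \<circ> h \<circ> snd g)"] by blast
  have "\<forall>n. \<exists>g. g \<in> Isom \<and>
      (\<forall>p\<in>H3. Hs n p = fst (fs n) (H (fst g p))) \<and> hs n = snd (fs n) \<circ> h \<circ> snd g"
    using fs unfolding Bex_def by simp
  then obtain gs where gs: "\<And>n. gs n \<in> Isom \<and>
      (\<forall>p\<in>H3. Hs n p = fst (fs n) (H (fst (gs n) p))) \<and> hs n = snd (fs n) \<circ> h \<circ> snd (gs n)"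
    using choice[of "\<lambda>n g. g \<in> Isom \<and>
      (\<forall>p\<in>H3. Hs n p = fst (fs n) (H (fst g p))) \<and> hs n = snd (fs n) \<circ> h \<circ> snd g"] by blast
  have fg: "\<And>n. fs n \<in> Isom" "\<And>n. gs n \<in> Isom" using fs gs by simp_all
  have HsE: "\<And>n p. p \<in> H3 \<Longrightarrow> Hs n p = fst (fs n) (H (fst (gs n) p))" using gs by simp
  have hsE: "\<And>n. hs n = snd (fs n) \<circ> h \<circ> snd (gs n)" using gs by simp
  have hsx: "hs n x = snd (fs n) (h (snd (gs n) x))" for n x using hsE[of n] by simp
  have inj_hs: "inj (hs n)" for n
    unfolding hsE using Isom_bij_snd[OF fg(1)] Isom_bij_snd[OF fg(2)] bh
    by (intro inj_compose bij_is_inj) auto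
  show ?thesis unfolding tame_def
  proof
    fix p assume p: "p \<in> H3"
    have HsH: "Hs n p \<in> H3" for n
      using HsE[OF p] Isom_H3'[OF fg(1)] Isom_H3'[OF fg(2) p] cont_H3[OF cH] by simp
    define W where "W n = cayley (Hs n p)" for n
    define PB where "PB x y = (\<exists>B. \<forall>n. Phi (emb_S (hs n x)) (emb_S (hs n y)) (W n) \<le> B)" for x y
    have pb: "PB x y" if "x \<noteq> y" for x y
      unfolding PB_def W_def hsx HsE[OF p]
      by (rule pair_bound[OF cH bh injH G1 G2 inv1 eqv K1 fg p that])
    obtain B1 where B1: "\<And>n. Phi (emb_S (hs n a)) (emb_S (hs n b)) (W n) \<le> B1"
      using pb[OF assms(3)] unfolding PB_def by blast
    obtain B2 where B2: "\<And>n. Phi (emb_S (hs n a)) (emb_S (hs n c)) (W n) \<le> B2"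
      using pb[OF assms(4)] unfolding PB_def by blast
    obtain B3 where B3: "\<And>n. Phi (emb_S (hs n b)) (emb_S (hs n c)) (W n) \<le> B3"
      using pb[OF assms(5)] unfolding PB_def by blast
    define M where "M = max 1 (max B1 (max B2 B3))"
    have M: "M > 0" unfolding M_def by simp
    have dist_low: "\<exists>\<delta>>0. \<forall>n. \<delta> \<le> norm (emb_S (hs n x) - emb_S (hs n y))"
      if "x \<noteq> y" "S_conv (\<lambda>n. hs n x) \<xi>" "S_conv (\<lambda>n. hs n y) \<eta>" "\<xi> \<noteq> \<eta>" for x y \<xi> \<eta>
    proof (rule pos_inf)
      show "norm (emb_S (hs n x) - emb_S (hs n y)) > 0" for n
      proof -
        have "hs n x \<noteq> hs n y" using that(1) inj_hs[of n] by (simp add: inj_eq)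
        hence "emb_S (hs n x) \<noteq> emb_S (hs n y)" using emb_inj by blast
        thus ?thesis by simp
      qed
      show "(\<lambda>n. norm (emb_S (hs n x) - emb_S (hs n y))) \<longlonglongrightarrow> norm (emb_S \<xi> - emb_S \<eta>)"
        using that(2,3) unfolding S_conv_def by (intro tendsto_intros)
      show "norm (emb_S \<xi> - emb_S \<eta>) > 0" using that(4) emb_inj by auto
    qed
    obtain d1 where d1: "d1 > 0" "\<And>n. d1 \<le> norm (emb_S (hs n a) - emb_S (hs n b))"
      using dist_low[OF assms(3) assms(6) assms(7) assms(9)] by blast
    obtain d2 where d2: "d2 > 0" "\<And>n. d2 \<le> norm (emb_S (hs n a) - emb_S (hs n c))"
      using dist_low[OF assms(4) assms(6) assms(8) assms(10)] by blast
    obtain d3 where d3: "d3 > 0" "\<And>n. d3 \<le> norm (emb_S (hs n b) - emb_S (hs n c))"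
      using dist_low[OF assms(5) assms(7) assms(8) assms(11)] by blast
    define \<delta> where "\<delta> = min d1 (min d2 d3)"
    have \<delta>: "\<delta> > 0" unfolding \<delta>_def using d1 d2 d3 by simp
    define \<epsilon> where "\<epsilon> = sqrt (\<delta>^4 / 64 / M)"
    have \<epsilon>: "\<epsilon> > 0" unfolding \<epsilon>_def using \<delta> M by simp
    have rW: "\<epsilon> \<le> rho (W n)" for n
    proof -
      have rWp: "rho (W n) > 0" unfolding W_def using rho_cayley_pos[OF HsH] .
      have "\<delta>^4 / 64 \<le> M * (rho (W n))^2"
        apply (rule triple_lower[where X="emb_S (hs n a)" and Y="emb_S (hs n b)" and Z="emb_S (hs n c)",
              OF _ _ _ rWp \<delta>])
        unfolding \<delta>_def M_def
                apply (simp_all add: norm_emb min_le_iff_disj le_max_iff_disj)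
        using d1(2)[of n] d2(2)[of n] d3(2)[of n] B1[of n] B2[of n] B3[of n] by simp_all
      hence "\<delta>^4 / 64 / M \<le> (rho (W n))^2" using M by (simp add: field_simps)
      hence "\<epsilon> \<le> sqrt ((rho (W n))^2)" unfolding \<epsilon>_def by (rule real_sqrt_le_mono)
      thus ?thesis using rWp by simp
    qed
    define rp where "rp = rho (cayley p)"
    have rp: "rp > 0" unfolding rp_def using rho_cayley_pos[OF p] .
    define R where "R = arcosh (1 + 2 * (4 / (\<epsilon> * rp)))"
    show "\<exists>R. \<forall>n. Hs n p \<in> H3 \<and> hdist (Hs n p) p \<le> R"
    proof (intro exI[of _ R] allI conjI)
      fix n
      show "Hs n p \<in> H3" by (rule HsH)
      have nW: "norm (W n - cayley p) \<le> 2"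
        using norm_triangle_ineq4[of "W n" "cayley p"] norm_cayley_lt[OF HsH[of n]]
          norm_cayley_lt[OF p] unfolding W_def by linarith
      have rWp: "rho (W n) > 0" unfolding W_def using rho_cayley_pos[OF HsH] .
      have "Dq (W n) (cayley p) = (norm (W n - cayley p))^2 / (rho (W n) * rp)"
        unfolding Dq_def rp_def ..
      also have "\<dots> \<le> 4 / (\<epsilon> * rp)"
      proof (rule frac_le)
        show "(norm (W n - cayley p))^2 \<le> 4" using power_mono[OF nW norm_ge_zero, of 2]
          by simp
        show "0 < \<epsilon> * rp" using \<epsilon> rp by simp
        show "\<epsilon> * rp \<le> rho (W n) * rp" using rW[of n] rp by simp
      qed simp
      finally have Dle: "Dq (W n) (cayley p) \<le> 4 / (\<epsilon> * rp)" .
      have D0: "Dq (W n) (cayley p) \<ge> 0" unfolding W_def using Dq_nonneg[OF HsH p] .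
      have "hdist (Hs n p) p = arcosh (1 + 2 * Dq (W n) (cayley p))"
        unfolding W_def using hdist_cayley[OF HsH p] .
      also have "\<dots> \<le> R" unfolding R_def
      proof -
        have x1: "1 \<le> 1 + 2 * Dq (W n) (cayley p)" using D0 by simp
        have le: "1 + 2 * Dq (W n) (cayley p) \<le> 1 + 2 * (4 / (\<epsilon> * rp))" using Dle by simp
        hence y1: "1 \<le> 1 + 2 * (4 / (\<epsilon> * rp))" using x1 by linarith
        have "\<not> arcosh (1 + 2 * (4 / (\<epsilon> * rp))) < arcosh (1 + 2 * Dq (W n) (cayley p))"
          using arcosh_less_iff_real[OF y1 x1] le by simp
        thus "arcosh (1 + 2 * Dq (W n) (cayley p)) \<le> arcosh (1 + 2 * (4 / (\<epsilon> * rp)))" by simp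
      qed
      finally show "hdist (Hs n p) p \<le> R" .
    qed
  qed
qed


end
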